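(* In the model described in the context, if $(\tilde y_0^+,\tilde y_0^-)=(1,1)$ (deterministically), then $\Pr(W_2)-\Pr(W_1) = \tfrac12(G-A)$.
   Context: Model. Fix an integer $m\ge 2$, and reals $1>\rho>q>0$, $0\le\nu<\tfrac12$. A sample consists of ground-truth labels $y_0,y_1,\dots,y_m\in\{0,1\}$ and noisy labels $\tilde y_0,\dots,\tilde y_m\in\{0,1\}$. Given $y_0$, the labels $y_1,\dots,y_m$ are conditionally independent with $\Pr(y_i=1\mid y_0=1)=\rho$ and $\Pr(y_i=1\mid y_0=0)=q$ for $i\in\{1,\dots,m\}$. For $i\in\{1,\dots,m\}$, $\tilde y_i = 1-y_i$ with probability $\nu$ and $\tilde y_i=y_i$ otherwise, the flips being independent of each other and of everything else. A positive sample has $y_0=1$ and a negative sample has $y_0=0$; we draw one positive sample (superscript $+$) and one negative sample (superscript $-$) independently. The pair $(\tilde y_0^+,\tilde y_0^-)\in\{0,1\}^2$ has an arbitrary distribution, independent of all $y_i^\pm,\tilde y_i^\pm$ with $i\ge1$. Fix $\delta>0$. For each sample set $\bar s_{0,i} := \max(\tilde y_0,\tilde y_i)+\delta\min(\tilde y_0,\tilde y_i)$ for $i=1,\dots,m$, and let $\bar r_1\ge \bar r_2$ be the largest and second largest elements of $\{\bar s_{0,1},\dots,\bar s_{0,m}\}$ (as a multiset). Notation: $\rho' := (1-\nu)\rho+\nu(1-\rho)$, $q':=(1-\nu)q+\nu(1-q)$, $a:=1-\rho'$, $\gamma := \frac{1-q'}{1-\rho'}$, $A := m(1-a)a^{m-1}$,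 $G := m(1-\gamma a)(\gamma a)^{m-1}$. For $k\in\{1,2\}$, $\Pr(W_k) := \Pr(\bar r_k^+>\bar r_k^-) + \tfrac12\Pr(\bar r_k^+=\bar r_k^-)$. *)

theory Defs
  imports "HOL-Probability.Probability"
begin

text \<open>Noisy labels of the m non-anchor positions (indices 1..m) of one sample whose
  ground-truth anchor label y0 is fixed: y_i ~ Bernoulli(p) independently (p = rho for a
  positive sample, p = q for a negative one), flips f_i ~ Bernoulli(nu) independently,
  and the noisy label is y_i xor f_i.\<close>
definition noisy_labels :: "nat \<Rightarrow> real \<Rightarrow> real \<Rightarrow> (nat \<Rightarrow> bool) pmf" where
  "noisy_labels m p \<nu> =
     do { y \<leftarrow> Pi_pmf {1..m} False (\<lambda>_. bernoulli_pmf p);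
          f \<leftarrow> Pi_pmf {1..m} False (\<lambda>_. bernoulli_pmf \<nu>);
          return_pmf (\<lambda>i. y i \<noteq> f i) }"

text \<open>Joint law of one positive and one negative sample, each represented by
  (noisy anchor label, noisy labels 1..m). D is the (arbitrary) law of the pair of noisy
  anchor labels, independent of everything else.\<close>
definition sample_pmf ::
  "nat \<Rightarrow> real \<Rightarrow> real \<Rightarrow> real \<Rightarrow> (bool \<times> bool) pmf
     \<Rightarrow> ((bool \<times> (nat \<Rightarrow> bool)) \<times> (bool \<times> (nat \<Rightarrow> bool))) pmf" where
  "sample_pmf m \<rho> q \<nu> D =
     do { t \<leftarrow> D;
          a \<leftarrow> noisy_labels m \<rho> \<nu>;
          b \<leftarrow> noisy_labels m q \<nu>;
          return_pmf ((fst t, a), (snd t, b)) }"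

definition score :: "real \<Rightarrow> bool \<Rightarrow> bool \<Rightarrow> real" where
  "score \<delta> t0 ti = max (of_bool t0) (of_bool ti) + \<delta> * min (of_bool t0) (of_bool ti)"

text \<open>k-th largest element (k \<ge> 1) of the multiset {s_{0,1},...,s_{0,m}}.\<close>
definition rbar :: "nat \<Rightarrow> real \<Rightarrow> nat \<Rightarrow> bool \<times> (nat \<Rightarrow> bool) \<Rightarrow> real" where
  "rbar m \<delta> k s = rev (sort (map (\<lambda>i. score \<delta> (fst s) (snd s i)) [1..<m+1])) ! (k - 1)"

definition probW ::
  "nat \<Rightarrow> real \<Rightarrow> real \<Rightarrow> real \<Rightarrow> (bool \<times> bool) pmf \<Rightarrow> real \<Rightarrow> nat \<Rightarrow> real" where
  "probW m \<rho> q \<nu> D \<delta> k =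
     measure_pmf.prob (sample_pmf m \<rho> q \<nu> D) {(P, N). rbar m \<delta> k P > rbar m \<delta> k N}
     + 1/2 * measure_pmf.prob (sample_pmf m \<rho> q \<nu> D) {(P, N). rbar m \<delta> k P = rbar m \<delta> k N}"

end

theory Submission
  imports Defs
begin

lemma bern_mix:
  assumes "0 \<le> p" "p \<le> 1" "0 \<le> \<nu>" "\<nu> \<le> 1"
  shows "bernoulli_pmf p \<bind> (\<lambda>y. bernoulli_pmf \<nu> \<bind> (\<lambda>f. return_pmf (y \<noteq> f)))
       = bernoulli_pmf ((1 - \<nu>) * p + \<nu> * (1 - p))"
proof -
  have h: "0 \<le> (1 - \<nu>) * p + \<nu> * (1 - p)" "(1 - \<nu>) * p + \<nu> * (1 - p) \<le> 1"
    using assms by (auto intro!: add_nonneg_nonneg mult_nonneg_nonneg)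
      (smt (verit) mult_left_le mult_right_le_one_le)
  show ?thesis
  proof (rule pmf_eqI)
    fix b :: bool
    show "pmf (bernoulli_pmf p \<bind> (\<lambda>y. bernoulli_pmf \<nu> \<bind> (\<lambda>f. return_pmf (y \<noteq> f)))) b
        = pmf (bernoulli_pmf ((1 - \<nu>) * p + \<nu> * (1 - p))) b"
      using assms h by (cases b) (simp_all add: pmf_bind algebra_simps)
  qed
qed

lemma noisy_eq:
  assumes "0 \<le> p" "p \<le> 1" "0 \<le> \<nu>" "\<nu> \<le> 1"
  shows "noisy_labels m p \<nu> = Pi_pmf {1..m} False (\<lambda>_. bernoulli_pmf ((1 - \<nu>) * p + \<nu> * (1 - p)))"
proof -
  let ?A = "{1..m}"
  have "Pi_pmf ?A False (\<lambda>_. bernoulli_pmf ((1 - \<nu>) * p + \<nu> * (1 - p)))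
     = Pi_pmf ?A False (\<lambda>_. bernoulli_pmf p \<bind> (\<lambda>y. bernoulli_pmf \<nu> \<bind> (\<lambda>f. return_pmf (y \<noteq> f))))"
    using bern_mix[OF assms] by simp
  also have "\<dots> = Pi_pmf ?A False (\<lambda>_. bernoulli_pmf p) \<bind>
      (\<lambda>Y. Pi_pmf ?A False (\<lambda>x. bernoulli_pmf \<nu> \<bind> (\<lambda>f. return_pmf (Y x \<noteq> f))))"
    by (rule Pi_pmf_bind[where d'=False]) simp
  also have "\<dots> = Pi_pmf ?A False (\<lambda>_. bernoulli_pmf p) \<bind>
      (\<lambda>Y. Pi_pmf ?A False (\<lambda>_. bernoulli_pmf \<nu>) \<bind> (\<lambda>F. Pi_pmf ?A False (\<lambda>x. return_pmf (Y x \<noteq> F x))))"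
    by (intro bind_pmf_cong refl Pi_pmf_bind[where d'=False]) simp
  also have "\<dots> = noisy_labels m p \<nu>"
    unfolding noisy_labels_def
  proof (intro bind_pmf_cong refl)
    fix Y F assume Y: "Y \<in> set_pmf (Pi_pmf ?A False (\<lambda>_. bernoulli_pmf p))"
      and F: "F \<in> set_pmf (Pi_pmf ?A False (\<lambda>_. bernoulli_pmf \<nu>))"
    have "\<forall>x. x \<notin> ?A \<longrightarrow> Y x = False" using set_Pi_pmf_subset[of ?A False] Y by blast
    moreover have "\<forall>x. x \<notin> ?A \<longrightarrow> F x = False" using set_Pi_pmf_subset[of ?A False] F by blast
    ultimately have "(\<lambda>x. if x \<in> ?A then Y x \<noteq> F x else False) = (\<lambda>i. Y i \<noteq> F i)" by auto
    moreover have "Pi_pmf ?A False (\<lambda>x. return_pmf (Y x \<noteq> F x)) = return_pmf (\<lambda>x. if x \<in> ?A then Y x \<noteq> F x else False)"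
      by (rule Pi_pmf_return_pmf) simp
    ultimately show "Pi_pmf ?A False (\<lambda>x. return_pmf (Y x \<noteq> F x)) = return_pmf (\<lambda>i. Y i \<noteq> F i)"
      by simp
  qed
  finally show ?thesis by simp
qed

definition cnt :: "nat \<Rightarrow> (nat \<Rightarrow> bool) \<Rightarrow> nat" where
  "cnt m f = card {i\<in>{1..m}. f i}"

lemma prob_cnt1:
  assumes "0 \<le> r" "r \<le> 1"
  shows "measure_pmf.prob (Pi_pmf {1..m} False (\<lambda>_. bernoulli_pmf r)) {f. cnt m f = 1}
       = real m * r * (1 - r) ^ (m - 1)"
proof -
  let ?M = "Pi_pmf {1..m} False (\<lambda>_. bernoulli_pmf r)"
  let ?S = "{f. cnt m f = 1}"
  let ?I = "(\<lambda>j. \<lambda>i::nat. i = j) ` {1..m}"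
  have sub: "set_pmf ?M \<subseteq> {f. \<forall>x. x \<notin> {1..m} \<longrightarrow> f x = False}"
    by (rule set_Pi_pmf_subset) simp
  have IS: "?I \<subseteq> ?S"
  proof
    fix f assume "f \<in> ?I"
    then obtain j where j: "j \<in> {1..m}" "f = (\<lambda>i. i = j)" by blast
    hence "{i\<in>{1..m}. f i} = {j}" by auto
    thus "f \<in> ?S" by (simp add: cnt_def)
  qed
  have SI: "?S \<inter> set_pmf ?M \<subseteq> ?I"
  proof
    fix f assume f: "f \<in> ?S \<inter> set_pmf ?M"
    then obtain j where j: "{i\<in>{1..m}. f i} = {j}" by (auto simp: cnt_def card_1_singleton_iff)
    hence "j \<in> {1..m}" by auto
    moreover have "f = (\<lambda>i. i = j)"
    proof
      fix i show "f i = (i = j)" using j f sub by (cases "i \<in> {1..m}") auto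
    qed
    ultimately show "f \<in> ?I" by blast
  qed
  have "measure_pmf.prob ?M ?S = measure_pmf.prob ?M (?S \<inter> set_pmf ?M)"
    by (simp add: measure_Int_set_pmf)
  also have "?S \<inter> set_pmf ?M = ?I \<inter> set_pmf ?M" using IS SI by blast
  also have "measure_pmf.prob ?M \<dots> = measure_pmf.prob ?M ?I"
    by (simp add: measure_Int_set_pmf)
  also have "\<dots> = sum (pmf ?M) ?I" by (simp add: measure_measure_pmf_finite)
  also have "\<dots> = (\<Sum>j\<in>{1..m}. pmf ?M (\<lambda>i. i = j))"
    by (subst sum.reindex) (auto simp: inj_on_def fun_eq_iff)
  also have "\<dots> = (\<Sum>j\<in>{1..m}. r * (1 - r) ^ (m - 1))"
  proof (rule sum.cong[OF refl])
    fix j assume j: "j \<in> {1..m}"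
    have "pmf ?M (\<lambda>i. i = j) = (\<Prod>x\<in>{1..m}. pmf (bernoulli_pmf r) (x = j))"
      using j by (subst pmf_Pi) auto
    also have "\<dots> = pmf (bernoulli_pmf r) True * (\<Prod>x\<in>{1..m}-{j}. pmf (bernoulli_pmf r) (x = j))"
      using j by (subst prod.remove[of _ j]) auto
    also have "(\<Prod>x\<in>{1..m}-{j}. pmf (bernoulli_pmf r) (x = j)) = (\<Prod>x\<in>{1..m}-{j}. 1 - r)"
      using assms by (intro prod.cong) auto
    also have "\<dots> = (1 - r) ^ (m - 1)" using j by simp
    finally show "pmf ?M (\<lambda>i. i = j) = r * (1 - r) ^ (m - 1)" using assms by simp
  qed
  also have "\<dots> = real m * r * (1 - r) ^ (m - 1)" by simp
  finally show ?thesis .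
qed

lemma rbar_True:
  assumes "1 \<le> k" "k \<le> m" "\<delta> > 0"
  shows "rbar m \<delta> k (True, f) = (if k \<le> cnt m f then 1 + \<delta> else 1)"
proof -
  let ?xs = "[1..<m+1]"
  let ?g = "\<lambda>i. score \<delta> True (f i)"
  let ?T = "filter f ?xs" and ?F = "filter (\<lambda>i. \<not> f i) ?xs"
  have g: "?g i = (if f i then 1 + \<delta> else 1)" for i by (simp add: score_def)
  have lT: "length ?T = cnt m f"
    unfolding cnt_def by (subst distinct_length_filter) (auto intro!: arg_cong[where f=card])
  have lF: "length ?F = m - cnt m f"
  proof -
    have "length ?T + length ?F = length ?xs" by (rule sum_length_filter_compl)
    also have "length ?xs = m" by (simp only: length_upt)
    finally show ?thesis using lT by linarith
  qed
  have mT: "map ?g ?T = replicate (length ?T) (1 + \<delta>)"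
    by (rule replicate_length_same[symmetric, THEN trans]) (auto simp: g)
  have mF: "map ?g ?F = replicate (length ?F) 1"
    by (rule replicate_length_same[symmetric, THEN trans]) (auto simp: g)
  have "mset (map ?g ?xs) = mset (map ?g ?T) + mset (map ?g ?F)"
    by (metis mset_filter image_mset_union mset_map multiset_partition)
  also have "\<dots> = mset (replicate (length ?F) 1 @ replicate (length ?T) (1 + \<delta>))"
    unfolding mT mF mset_append by (rule add.commute)
  finally have ms: "mset (map ?g ?xs) = mset (replicate (length ?F) 1 @ replicate (length ?T) (1 + \<delta>))" .
  have so: "sorted (replicate (length ?F) (1::real) @ replicate (length ?T) (1 + \<delta>))"
    using assms by (auto simp: sorted_append)
  have "sort (map ?g ?xs) = replicate (length ?F) 1 @ replicate (length ?T) (1 + \<delta>)"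
    using properties_for_sort[OF ms[symmetric] so] by simp
  hence "rbar m \<delta> k (True, f) = (replicate (length ?T) (1 + \<delta>) @ replicate (length ?F) 1) ! (k - 1)"
    by (simp add: rbar_def)
  also have "\<dots> = (if k \<le> cnt m f then 1 + \<delta> else 1)"
    using assms lT lF by (auto simp: nth_append)
  finally show ?thesis .
qed

lemma sample_eq:
  "sample_pmf m \<rho> q \<nu> (return_pmf (True, True)) =
     map_pmf (\<lambda>(a, b). ((True, a), (True, b))) (pair_pmf (noisy_labels m \<rho> \<nu>) (noisy_labels m q \<nu>))"
  by (simp add: sample_pmf_def pair_pmf_def map_bind_pmf bind_return_pmf)

lemma probW_k:
  assumes "1 \<le> k" "k \<le> m" "\<delta> > 0"
  shows "probW m \<rho> q \<nu> (return_pmf (True, True)) \<delta> k =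
    1/2 + (measure_pmf.prob (map_pmf (cnt m) (noisy_labels m \<rho> \<nu>)) {x. k \<le> x}
         - measure_pmf.prob (map_pmf (cnt m) (noisy_labels m q \<nu>)) {x. k \<le> x}) / 2"
proof -
  let ?P = "noisy_labels m \<rho> \<nu>" and ?N = "noisy_labels m q \<nu>"
  let ?CP = "map_pmf (cnt m) ?P" and ?CN = "map_pmf (cnt m) ?N"
  let ?h = "\<lambda>(a, b). ((True, a), (True, b))"
  let ?c = "\<lambda>(a::nat\<Rightarrow>bool, b::nat\<Rightarrow>bool). (cnt m a, cnt m b)"
  let ?K = "{x. k \<le> x}" and ?L = "{x. \<not> k \<le> x}"
  define p where "p = measure_pmf.prob ?CP ?K"
  define n where "n = measure_pmf.prob ?CN ?K"
  have pc: "measure_pmf.prob ?CP ?L = 1 - p"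
    using measure_pmf.prob_compl[of ?K ?CP] by (simp add: p_def Compl_eq_Diff_UNIV[symmetric] Collect_neg_eq)
  have nc: "measure_pmf.prob ?CN ?L = 1 - n"
    using measure_pmf.prob_compl[of ?K ?CN] by (simp add: n_def Compl_eq_Diff_UNIV[symmetric] Collect_neg_eq)
  have R: "rbar m \<delta> k (True, f) = (if k \<le> cnt m f then 1 + \<delta> else 1)" for f
    by (rule rbar_True[OF assms])
  have red: "measure_pmf.prob (sample_pmf m \<rho> q \<nu> (return_pmf (True, True))) E
     = measure_pmf.prob (pair_pmf ?CP ?CN) X" if "?h -` E = ?c -` X" for E X
  proof -
    have "measure_pmf.prob (sample_pmf m \<rho> q \<nu> (return_pmf (True, True))) E
        = measure_pmf.prob (pair_pmf ?P ?N) (?h -` E)" by (simp add: sample_eq)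
    also have "\<dots> = measure_pmf.prob (map_pmf ?c (pair_pmf ?P ?N)) X" using that by simp
    also have "map_pmf ?c (pair_pmf ?P ?N) = pair_pmf ?CP ?CN" by (rule map_pair)
    finally show ?thesis .
  qed
  have gt: "measure_pmf.prob (sample_pmf m \<rho> q \<nu> (return_pmf (True, True)))
       {(P, N). rbar m \<delta> k P > rbar m \<delta> k N} = p * (1 - n)"
  proof -
    have "?h -` {(P, N). rbar m \<delta> k P > rbar m \<delta> k N} = ?c -` (?K \<times> ?L)"
      using assms by (auto simp: R split: if_splits)
    hence "measure_pmf.prob (sample_pmf m \<rho> q \<nu> (return_pmf (True, True)))
       {(P, N). rbar m \<delta> k P > rbar m \<delta> k N} = measure_pmf.prob (pair_pmf ?CP ?CN) (?K \<times> ?L)"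
      by (rule red)
    also have "\<dots> = measure_pmf.prob ?CP ?K * measure_pmf.prob ?CN ?L"
      by (intro measure_pmf_prob_product countableI_type)
    also have "\<dots> = p * (1 - n)" unfolding nc p_def ..
    finally show ?thesis .
  qed
  have eq: "measure_pmf.prob (sample_pmf m \<rho> q \<nu> (return_pmf (True, True)))
       {(P, N). rbar m \<delta> k P = rbar m \<delta> k N} = p * n + (1 - p) * (1 - n)"
  proof -
    have "?h -` {(P, N). rbar m \<delta> k P = rbar m \<delta> k N} = ?c -` (?K \<times> ?K \<union> ?L \<times> ?L)"
      using assms by (auto simp: R split: if_splits)
    hence "measure_pmf.prob (sample_pmf m \<rho> q \<nu> (return_pmf (True, True)))
       {(P, N). rbar m \<delta> k P = rbar m \<delta> k N} = measure_pmf.prob (pair_pmf ?CP ?CN) (?K \<times> ?K \<union> ?L \<times> ?L)"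
      by (rule red)
    also have "\<dots> = measure_pmf.prob (pair_pmf ?CP ?CN) (?K \<times> ?K) + measure_pmf.prob (pair_pmf ?CP ?CN) (?L \<times> ?L)"
      by (rule measure_pmf.finite_measure_Union) auto
    also have "\<dots> = measure_pmf.prob ?CP ?K * measure_pmf.prob ?CN ?K + measure_pmf.prob ?CP ?L * measure_pmf.prob ?CN ?L"
      by (intro arg_cong2[where f="(+)"] measure_pmf_prob_product countableI_type)
    also have "\<dots> = p * n + (1 - p) * (1 - n)"
      unfolding pc nc p_def n_def ..
    finally show ?thesis .
  qed
  show ?thesis unfolding probW_def gt eq p_def[symmetric] n_def[symmetric]
    by (simp add: field_simps)
qed

lemma split12:
  "measure_pmf.prob (map_pmf (cnt m) M) {x. 1 \<le> x} - measure_pmf.prob (map_pmf (cnt m) M) {x. 2 \<le> x}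
   = measure_pmf.prob M {f. cnt m f = 1}"
proof -
  have "{x::nat. 1 \<le> x} = {x. x = 1} \<union> {x. 2 \<le> x}" by auto
  hence "measure_pmf.prob (map_pmf (cnt m) M) {x. 1 \<le> x} =
     measure_pmf.prob (map_pmf (cnt m) M) {x. x = 1} + measure_pmf.prob (map_pmf (cnt m) M) {x. 2 \<le> x}"
    by (simp only:) (rule measure_pmf.finite_measure_Union, auto)
  moreover have "measure_pmf.prob (map_pmf (cnt m) M) {x. x = 1} = measure_pmf.prob M {f. cnt m f = 1}"
    by (simp add: vimage_def)
  ultimately show ?thesis by simp
qed

theorem lemma4:
  fixes m :: nat and \<rho> q \<nu> \<delta> :: real and D :: "(bool \<times> bool) pmf"
  assumes "m \<ge> 2" and "q > 0" and "q < \<rho>" and "\<rho> < 1"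
    and "0 \<le> \<nu>" and "\<nu> < 1/2" and "\<delta> > 0"
    and "D = return_pmf (True, True)"
  shows "let \<rho>' = (1 - \<nu>) * \<rho> + \<nu> * (1 - \<rho>);
             q' = (1 - \<nu>) * q + \<nu> * (1 - q);
             a = 1 - \<rho>';
             \<gamma> = (1 - q') / (1 - \<rho>');
             A = real m * (1 - a) * a ^ (m - 1);
             G = real m * (1 - \<gamma> * a) * (\<gamma> * a) ^ (m - 1)
         in probW m \<rho> q \<nu> D \<delta> 2 - probW m \<rho> q \<nu> D \<delta> 1 = 1/2 * (G - A)"
proof -
  define r where "r = (1 - \<nu>) * \<rho> + \<nu> * (1 - \<rho>)"
  define s where "s = (1 - \<nu>) * q + \<nu> * (1 - q)"
  have nu1': "0 \<le> 1 - \<nu>" using assms by simp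
  have r01: "0 \<le> r" "r \<le> 1"
  proof -
    have "0 \<le> (1 - \<nu>) * \<rho>" "0 \<le> \<nu> * (1 - \<rho>)" "0 \<le> (1 - \<rho>) * (1 - \<nu>)" "0 \<le> \<nu> * \<rho>"
      using assms nu1' by auto
    moreover have "1 - r = (1 - \<rho>) * (1 - \<nu>) + \<nu> * \<rho>" unfolding r_def by (simp add: algebra_simps)
    ultimately show "0 \<le> r" "r \<le> 1" unfolding r_def by linarith+
  qed
  have s01: "0 \<le> s" "s \<le> 1"
  proof -
    have "0 \<le> (1 - \<nu>) * q" "0 \<le> \<nu> * (1 - q)" "0 \<le> (1 - q) * (1 - \<nu>)" "0 \<le> \<nu> * q"
      using assms nu1' by auto
    moreover have "1 - s = (1 - q) * (1 - \<nu>) + \<nu> * q" unfolding s_def by (simp add: algebra_simps)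
    ultimately show "0 \<le> s" "s \<le> 1" unfolding s_def by linarith+
  qed
  have rpos: "1 - r > 0"
  proof -
    have "1 - r = (1 - \<rho>) * (1 - \<nu>) + \<nu> * \<rho>" unfolding r_def by (simp add: algebra_simps)
    moreover have "(1 - \<rho>) * (1 - \<nu>) > 0" using assms by simp
    moreover have "\<nu> * \<rho> \<ge> 0" using assms by simp
    ultimately show ?thesis by linarith
  qed
  have nu1: "\<nu> \<le> 1" using assms by simp
  let ?P = "noisy_labels m \<rho> \<nu>" and ?N = "noisy_labels m q \<nu>"
  have P: "?P = Pi_pmf {1..m} False (\<lambda>_. bernoulli_pmf r)"
    unfolding r_def using assms by (intro noisy_eq) auto
  have N: "?N = Pi_pmf {1..m} False (\<lambda>_. bernoulli_pmf s)"
    unfolding s_def using assms by (intro noisy_eq) auto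
  note W1 = probW_k[of 1 m \<delta> \<rho> q \<nu>]
  note W2 = probW_k[of 2 m \<delta> \<rho> q \<nu>]
  have "probW m \<rho> q \<nu> D \<delta> 2 - probW m \<rho> q \<nu> D \<delta> 1
     = 1/2 * (measure_pmf.prob ?N {f. cnt m f = 1} - measure_pmf.prob ?P {f. cnt m f = 1})"
  proof -
    have m1: "1 \<le> m" "2 \<le> m" using assms by auto
    have w1: "probW m \<rho> q \<nu> D \<delta> 1 = 1/2 + (measure_pmf.prob (map_pmf (cnt m) ?P) {x. 1 \<le> x}
         - measure_pmf.prob (map_pmf (cnt m) ?N) {x. 1 \<le> x}) / 2"
      unfolding assms(8) by (rule probW_k) (use m1 assms(7) in auto)
    have w2: "probW m \<rho> q \<nu> D \<delta> 2 = 1/2 + (measure_pmf.prob (map_pmf (cnt m) ?P) {x. 2 \<le> x}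
         - measure_pmf.prob (map_pmf (cnt m) ?N) {x. 2 \<le> x}) / 2"
      unfolding assms(8) by (rule probW_k) (use m1 assms(7) in auto)
    have lin: "\<And>a b c d e f :: real. a - b = e \<Longrightarrow> c - d = f \<Longrightarrow> 1/2 + (b - d)/2 - (1/2 + (a - c)/2) = 1/2*(f - e)"
      by (simp add: field_simps)
    show ?thesis unfolding w1 w2 by (rule lin[OF split12[of m ?P] split12[of m ?N]])
  qed
  also have "\<dots> = 1/2 * (real m * s * (1 - s) ^ (m - 1) - real m * r * (1 - r) ^ (m - 1))"
    unfolding P N prob_cnt1[OF r01] prob_cnt1[OF s01] ..
  finally have main: "probW m \<rho> q \<nu> D \<delta> 2 - probW m \<rho> q \<nu> D \<delta> 1
     = 1/2 * (real m * s * (1 - s) ^ (m - 1) - real m * r * (1 - r) ^ (m - 1))" .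
  have ga: "(1 - s) / (1 - r) * (1 - r) = 1 - s" using rpos by simp
  show ?thesis unfolding Let_def r_def[symmetric] s_def[symmetric] ga main by (simp only: diff_diff_eq2 diff_self diff_zero) simp
qed

end
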